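(* Let $A$ be a ring, $M$ a left $A$-module, and $F$ an additive subgroup of $M$. Then $W(F) \cap A^\times = (A(F) \cap A^\times)^{-1}$. Moreover, the multiplicative monoid $W(F) \cap A(F) = \{a \in A \mid (F :_M a) = F\}$ is the largest subset $T$ of $A$ for which $F$ is both a $T$-submodule and a $T$-factroid of $M$.
   Context: Rings are unital, not necessarily commutative. For $a\in A$, $(F:_M a)=\{x\in M\mid ax\in F\}$. $W(F)=\{a\in A\mid (F:_M a)\subseteq F\}$ and $A(F)=\{a\in A\mid aF\subseteq F\}$. For $T\subseteq A$, a $T$-factroid of $M$ is an additive subgroup $F$ with $(F:_M t)\subseteq F$ for all $t\in T$, and a $T$-submodule of $M$ is an additive subgroup $F$ with $tF\subseteq F$ for all $t\in T$. For $X\subseteq A^\times$, $X^{-1}=\{x^{-1}\mid x\in X\}$. *)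

theory Defs
  imports Main
begin

text \<open>A ring A is modelled by a type of class ring_1 (unital, not necessarily
commutative); a left A-module M is an abelian group type 'm with a scalar
multiplication satisfying the left module axioms.\<close>

definition left_module :: "('a::ring_1 \<Rightarrow> 'm::ab_group_add \<Rightarrow> 'm) \<Rightarrow> bool" where
  "left_module sc \<longleftrightarrow>
     (\<forall>a x y. sc a (x + y) = sc a x + sc a y) \<and>
     (\<forall>a b x. sc (a + b) x = sc a x + sc b x) \<and>
     (\<forall>a b x. sc (a * b) x = sc a (sc b x)) \<and>
     (\<forall>x. sc 1 x = x)"

definition add_subgroup :: "'m::ab_group_add set \<Rightarrow> bool" where
  "add_subgroup F \<longleftrightarrow> 0 \<in> F \<and> (\<forall>x\<in>F. \<forall>y\<in>F. x + y \<in> F) \<and> (\<forall>x\<in>F. - x \<in> F)"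

definition colon :: "('a \<Rightarrow> 'm \<Rightarrow> 'm) \<Rightarrow> 'm set \<Rightarrow> 'a \<Rightarrow> 'm set" where
  "colon sc F a = {x. sc a x \<in> F}"

definition Wset :: "('a \<Rightarrow> 'm \<Rightarrow> 'm) \<Rightarrow> 'm set \<Rightarrow> 'a set" where
  "Wset sc F = {a. colon sc F a \<subseteq> F}"

definition Aset :: "('a \<Rightarrow> 'm \<Rightarrow> 'm) \<Rightarrow> 'm set \<Rightarrow> 'a set" where
  "Aset sc F = {a. sc a ` F \<subseteq> F}"

definition T_factroid :: "('a \<Rightarrow> 'm::ab_group_add \<Rightarrow> 'm) \<Rightarrow> 'a set \<Rightarrow> 'm set \<Rightarrow> bool" where
  "T_factroid sc T F \<longleftrightarrow> add_subgroup F \<and> (\<forall>t\<in>T. colon sc F t \<subseteq> F)"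

definition T_submodule :: "('a \<Rightarrow> 'm::ab_group_add \<Rightarrow> 'm) \<Rightarrow> 'a set \<Rightarrow> 'm set \<Rightarrow> bool" where
  "T_submodule sc T F \<longleftrightarrow> add_subgroup F \<and> (\<forall>t\<in>T. sc t ` F \<subseteq> F)"

definition ring_units :: "'a::ring_1 set" where
  "ring_units = {a. \<exists>b. a * b = 1 \<and> b * a = 1}"

definition unit_inv :: "'a::ring_1 \<Rightarrow> 'a" where
  "unit_inv a = (THE b. a * b = 1 \<and> b * a = 1)"

definition inv_set :: "'a::ring_1 set \<Rightarrow> 'a set" where
  "inv_set X = unit_inv ` X"

end

theory Submission
  imports Defs
begin

lemma unit_inv_eq:
  fixes a b :: "'a::ring_1"
  assumes "a * b = 1" "b * a = 1"
  shows "unit_inv a = b"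
  unfolding unit_inv_def
proof (rule the_equality)
  show "a * b = 1 \<and> b * a = 1" using assms by simp
  fix c assume c: "a * c = 1 \<and> c * a = 1"
  have "c = (b * a) * c" using assms by simp
  also have "\<dots> = b * (a * c)" by (simp add: mult.assoc)
  also have "\<dots> = b" using c by simp
  finally show "c = b" .
qed

lemma A_iff: "a \<in> Aset sc F \<longleftrightarrow> F \<subseteq> colon sc F a"
  unfolding Aset_def colon_def by auto

lemma W_iff: "a \<in> Wset sc F \<longleftrightarrow> colon sc F a \<subseteq> F"
  unfolding Wset_def by auto

lemma colon_unit:
  assumes lm: "left_module sc" and uv: "u * v = 1" "v * u = 1"
  shows "colon sc F u = sc v ` F"
proof -
  have m: "\<And>a b x. sc (a * b) x = sc a (sc b x)" and o: "\<And>x. sc 1 x = x"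
    using lm unfolding left_module_def by auto
  show ?thesis
  proof
    show "colon sc F u \<subseteq> sc v ` F"
    proof
      fix x assume "x \<in> colon sc F u"
      hence "sc u x \<in> F" by (simp add: colon_def)
      moreover have "x = sc v (sc u x)" using m[of v u x] uv o by simp
      ultimately show "x \<in> sc v ` F" by blast
    qed
    show "sc v ` F \<subseteq> colon sc F u"
    proof
      fix x assume "x \<in> sc v ` F"
      then obtain y where y: "y \<in> F" "x = sc v y" by blast
      have "sc u x = y" using m[of u v y] uv o y by simp
      thus "x \<in> colon sc F u" using y by (simp add: colon_def)
    qed
  qed
qed

theorem proposition3p9:
  fixes sc :: "'a::ring_1 \<Rightarrow> 'm::ab_group_add \<Rightarrow> 'm"
    and F :: "'m set"
  assumes "left_module sc"
    and "add_subgroup F"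
  shows "Wset sc F \<inter> ring_units = inv_set (Aset sc F \<inter> ring_units)
    \<and> Wset sc F \<inter> Aset sc F = {a. colon sc F a = F}
    \<and> 1 \<in> Wset sc F \<inter> Aset sc F
    \<and> (\<forall>a\<in>Wset sc F \<inter> Aset sc F. \<forall>b\<in>Wset sc F \<inter> Aset sc F.
           a * b \<in> Wset sc F \<inter> Aset sc F)
    \<and> (\<forall>T. (T_submodule sc T F \<and> T_factroid sc T F) \<longleftrightarrow> T \<subseteq> Wset sc F \<inter> Aset sc F)"
proof -
  have m: "\<And>a b x. sc (a * b) x = sc a (sc b x)" and o: "\<And>x. sc 1 x = x"
    using assms(1) unfolding left_module_def by auto
  have WA: "Wset sc F \<inter> Aset sc F = {a. colon sc F a = F}"
    by (auto simp: W_iff A_iff)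
  have P1: "Wset sc F \<inter> ring_units = inv_set (Aset sc F \<inter> ring_units)"
  proof
    show "Wset sc F \<inter> ring_units \<subseteq> inv_set (Aset sc F \<inter> ring_units)"
    proof
      fix u assume u: "u \<in> Wset sc F \<inter> ring_units"
      then obtain v where uv: "u * v = 1" "v * u = 1" by (auto simp: ring_units_def)
      have "sc v ` F \<subseteq> F" using u colon_unit[OF assms(1) uv, of F] by (simp add: W_iff)
      hence "v \<in> Aset sc F \<inter> ring_units" using uv by (auto simp: Aset_def ring_units_def)
      moreover have "unit_inv v = u" using unit_inv_eq uv by blast
      ultimately show "u \<in> inv_set (Aset sc F \<inter> ring_units)" unfolding inv_set_def by force
    qed
    show "inv_set (Aset sc F \<inter> ring_units) \<subseteq> Wset sc F \<inter> ring_units"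
    proof
      fix u assume "u \<in> inv_set (Aset sc F \<inter> ring_units)"
      then obtain v where v: "v \<in> Aset sc F" "v \<in> ring_units" "u = unit_inv v"
        unfolding inv_set_def by auto
      then obtain w where vw: "v * w = 1" "w * v = 1" by (auto simp: ring_units_def)
      have "u = w" using v(3) unit_inv_eq[OF vw] by simp
      hence uv: "u * v = 1" "v * u = 1" using vw by auto
      have "colon sc F u \<subseteq> F" using colon_unit[OF assms(1) uv, of F] v(1) by (simp add: Aset_def)
      thus "u \<in> Wset sc F \<inter> ring_units" using uv by (auto simp: W_iff ring_units_def)
    qed
  qed
  have P3: "1 \<in> Wset sc F \<inter> Aset sc F" unfolding WA by (simp add: colon_def o)
  have P4: "\<forall>a\<in>Wset sc F \<inter> Aset sc F. \<forall>b\<in>Wset sc F \<inter> Aset sc F.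
           a * b \<in> Wset sc F \<inter> Aset sc F"
    unfolding WA
  proof (intro ballI, simp)
    fix a b assume a: "colon sc F a = F" and b: "colon sc F b = F"
    have "colon sc F (a * b) = {x. sc b x \<in> colon sc F a}" by (simp add: colon_def m)
    also have "\<dots> = colon sc F b" using a by (simp add: colon_def)
    finally show "colon sc F (a * b) = F" using b by simp
  qed
  have P5: "\<forall>T. (T_submodule sc T F \<and> T_factroid sc T F) \<longleftrightarrow> T \<subseteq> Wset sc F \<inter> Aset sc F"
    using assms(2) unfolding T_submodule_def T_factroid_def Wset_def Aset_def by blast
  show ?thesis using P1 WA P3 P4 P5 by blast
qed

end
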